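(* If $T$ is convex, then an allocation $\mathbf X\in\mathcal A(\mathtt w)$ is Pareto optimal if and only if it is a full-insurance allocation, i.e., each $X_i$ is almost surely constant.
   Context: $(\Omega,\mathcal F,\mathbb P)$ is a nonatomic probability space, $\mathcal X\subset L^\infty(\Omega,\mathcal F,\mathbb P)$ a given collection of random variables, $n\ge2$ agents, aggregate endowment a constant $\mathtt w\in\mathbb R$, and $\mathcal A(\mathtt w):=\{(X_1,\ldots,X_n)\in\mathcal X^n:\sum_iX_i=\mathtt w\}$. Agent 1: $U_1(X)=\int u_1(X)\,d(T\circ\mathbb P)$ (Choquet integral); agents $i\ge2$: $U_i(X)=\int u_i(X)\,d\mathbb P$. Standing assumption: $T:[0,1]\to[0,1]$ twice differentiable, strictly increasing, $T(0)=0$, $T(1)=1$; each $u_i$ twice differentiable, strictly concave, increasing. $\mathbf X\in\mathcal A(\mathtt w)$ is Pareto optimal if there is no $\mathbf X'\in\mathcal A(\mathtt w)$ with $U_i(X_i')\ge U_i(X_i)$ for all $i$, with at least one strict inequality. *)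

theory Defs
  imports "HOL-Probability.Probability"
begin

definition nonatomic :: "'a measure \<Rightarrow> bool" where
  "nonatomic M \<longleftrightarrow> (\<forall>A\<in>sets M. measure M A > 0 \<longrightarrow>
      (\<exists>B\<in>sets M. B \<subseteq> A \<and> 0 < measure M B \<and> measure M B < measure M A))"

definition Linf :: "'a measure \<Rightarrow> ('a \<Rightarrow> real) set" where
  "Linf M = {X. X \<in> borel_measurable M \<and> (\<exists>C. AE \<omega> in M. \<bar>X \<omega>\<bar> \<le> C)}"

definition strictly_concave_on :: "real set \<Rightarrow> (real \<Rightarrow> real) \<Rightarrow> bool" where
  "strictly_concave_on S f \<longleftrightarrow> (\<forall>x\<in>S. \<forall>y\<in>S. \<forall>t::real. x \<noteq> y \<and> 0 < t \<and> t < 1 \<longrightarrow>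
      f ((1 - t) * x + t * y) > (1 - t) * f x + t * f y)"

definition twice_differentiable_on :: "real set \<Rightarrow> (real \<Rightarrow> real) \<Rightarrow> bool" where
  "twice_differentiable_on S f \<longleftrightarrow> (\<exists>f' f''. \<forall>x\<in>S.
      (f has_real_derivative f' x) (at x within S) \<and> (f' has_real_derivative f'' x) (at x within S))"

text \<open>Choquet integral of Z with respect to the distorted probability T \<circ> P.\<close>
definition choquet :: "'a measure \<Rightarrow> (real \<Rightarrow> real) \<Rightarrow> ('a \<Rightarrow> real) \<Rightarrow> real" where
  "choquet M T Z =
     (LINT t:{0..}|lborel. T (measure M {\<omega>\<in>space M. Z \<omega> > t}))
   + (LINT t:{..<0}|lborel. T (measure M {\<omega>\<in>space M. Z \<omega> > t}) - 1)"

text \<open>Utility of agent i (agents indexed 0..n-1; agent 0 is the rank-dependent agent).\<close>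
definition util :: "'a measure \<Rightarrow> (real \<Rightarrow> real) \<Rightarrow> (nat \<Rightarrow> real \<Rightarrow> real) \<Rightarrow> nat \<Rightarrow> ('a \<Rightarrow> real) \<Rightarrow> real" where
  "util M T u i X = (if i = 0 then choquet M T (\<lambda>\<omega>. u 0 (X \<omega>))
                     else integral\<^sup>L M (\<lambda>\<omega>. u i (X \<omega>)))"

definition allocations :: "'a measure \<Rightarrow> ('a \<Rightarrow> real) set \<Rightarrow> nat \<Rightarrow> real \<Rightarrow> (nat \<Rightarrow> 'a \<Rightarrow> real) set" where
  "allocations M \<X> n w = {Xs. (\<forall>i<n. Xs i \<in> \<X>) \<and> (AE \<omega> in M. (\<Sum>i<n. Xs i \<omega>) = w)}"

definition pareto_optimal ::
  "'a measure \<Rightarrow> (real \<Rightarrow> real) \<Rightarrow> (nat \<Rightarrow> real \<Rightarrow> real) \<Rightarrow> ('a \<Rightarrow> real) set \<Rightarrow> nat \<Rightarrow> real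
     \<Rightarrow> (nat \<Rightarrow> 'a \<Rightarrow> real) \<Rightarrow> bool" where
  "pareto_optimal M T u \<X> n w Xs \<longleftrightarrow> Xs \<in> allocations M \<X> n w \<and>
     \<not> (\<exists>Ys \<in> allocations M \<X> n w. (\<forall>i<n. util M T u i (Ys i) \<ge> util M T u i (Xs i)) \<and>
                                    (\<exists>i<n. util M T u i (Ys i) > util M T u i (Xs i)))"

definition full_insurance :: "'a measure \<Rightarrow> nat \<Rightarrow> (nat \<Rightarrow> 'a \<Rightarrow> real) \<Rightarrow> bool" where
  "full_insurance M n Xs \<longleftrightarrow> (\<forall>i<n. \<exists>c::real. AE \<omega> in M. Xs i \<omega> = c)"

end

theory Submission
  imports Defs
begin


lemma prob_as_integral:
  assumes "prob_space M" and [measurable]: "Z \<in> borel_measurable M"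
  shows "measure M {\<omega>\<in>space M. Z \<omega> > t} = (\<integral>\<omega>. (if t < Z \<omega> then 1 else 0) \<partial>M)"
proof -
  have "(\<integral>\<omega>. (if t < Z \<omega> then 1 else 0) \<partial>M) = (\<integral>\<omega>. indicator {\<omega>\<in>space M. Z \<omega> > t} \<omega> \<partial>M)"
    by (intro Bochner_Integration.integral_cong) (auto simp: indicator_def)
  also have "\<dots> = measure M {\<omega>\<in>space M. Z \<omega> > t}"
    by (simp add: Int_absorb2 subset_iff)
  finally show ?thesis by simp
qed

lemma layer_cake:
  assumes P: "prob_space M" and Zm[measurable]: "Z \<in> borel_measurable M"
    and bnd: "AE \<omega> in M. \<bar>Z \<omega>\<bar> \<le> C"
  defines "p \<equiv> \<lambda>t. measure M {\<omega>\<in>space M. Z \<omega> > t}"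
  shows "(LINT t|lborel. indicator {0..} t * p t + indicator {..<0} t * (p t - 1)) = integral\<^sup>L M Z"
proof -
  interpret prob_space M by fact
  interpret PS: pair_sigma_finite lborel M ..
  have C0: "0 \<le> C" using bnd by (metis (mono_tags, lifting) AE_const abs_ge_zero eventually_mono order_trans)
  define F where "F = (\<lambda>t \<omega>. indicator {-C..C} t * ((if t < Z \<omega> then 1 else 0) - (if t < 0 then 1 else 0)) :: real)"
  have Fm[measurable]: "(\<lambda>x. F (fst x) (snd x)) \<in> borel_measurable (lborel \<Otimes>\<^sub>M M)"
    unfolding F_def by measurable
  have Fm2: "(\<lambda>(\<omega>,t). F t \<omega>) \<in> borel_measurable (M \<Otimes>\<^sub>M lborel)"
    unfolding F_def split_beta' by measurable
  have h_eq: "indicator {0..} t * p t + indicator {..<0} t * (p t - 1) = (\<integral>\<omega>. F t \<omega> \<partial>M)" for t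
  proof -
    have pt: "p t = (\<integral>\<omega>. (if t < Z \<omega> then 1 else 0) \<partial>M)"
      unfolding p_def by (rule prob_as_integral[OF P Zm])
    show ?thesis
    proof (cases "t < -C")
      case True
      have "(\<integral>\<omega>. (if t < Z \<omega> then 1 else 0) \<partial>M) = (\<integral>\<omega>. (1::real) \<partial>M)"
      proof (rule integral_cong_AE)
        show "AE \<omega> in M. (if t < Z \<omega> then 1 else 0) = (1::real)"
          using bnd by eventually_elim (use True in auto)
      qed auto
      then have "p t = 1" using pt prob_space by simp
      moreover have "F t \<omega> = 0" for \<omega> using True by (simp add: F_def)
      ultimately show ?thesis using True C0 by (simp add: indicator_def)
    next
      case False
      show ?thesis
      proof (cases "t > C")
        case True
        have "(\<integral>\<omega>. (if t < Z \<omega> then 1 else 0) \<partial>M) = (\<integral>\<omega>. (0::real) \<partial>M)"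
        proof (rule integral_cong_AE)
          show "AE \<omega> in M. (if t < Z \<omega> then 1 else 0) = (0::real)"
            using bnd by eventually_elim (use True in auto)
        qed auto
        then have "p t = 0" using pt by simp
        moreover have "F t \<omega> = 0" for \<omega> using True by (simp add: F_def)
        ultimately show ?thesis using True C0 by (simp add: indicator_def)
      next
        case False2: False
        have "(\<integral>\<omega>. F t \<omega> \<partial>M) = (\<integral>\<omega>. (if t < Z \<omega> then 1 else 0) - (if t < 0 then 1 else 0) \<partial>M)"
          using False False2 by (simp add: F_def)
        also have "\<dots> = p t - (if t < 0 then 1 else 0)"
          using pt prob_space by (subst Bochner_Integration.integral_diff) (auto intro!: integrable_const_bound[where B=1])
        finally show ?thesis by (simp add: indicator_def)
      qed
    qed
  qed
  have int: "integrable (lborel \<Otimes>\<^sub>M M) (\<lambda>(t,\<omega>). F t \<omega>)"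
  proof (rule integrableI_bounded_set[where A="{-C..C} \<times> space M" and B=1])
    show "emeasure (lborel \<Otimes>\<^sub>M M) ({-C..C} \<times> space M) < \<infinity>"
      using C0 by (subst emeasure_pair_measure_Times) (auto simp: ennreal_mult_less_top emeasure_space_1)
    show "AE x in lborel \<Otimes>\<^sub>M M. x \<in> {-C..C} \<times> space M \<longrightarrow> norm (case x of (t, \<omega>) \<Rightarrow> F t \<omega>) \<le> 1"
      by (intro AE_I2) (auto simp: F_def indicator_def)
    show "AE x in lborel \<Otimes>\<^sub>M M. x \<notin> {-C..C} \<times> space M \<longrightarrow> (case x of (t, \<omega>) \<Rightarrow> F t \<omega>) = 0"
      by (intro AE_I2) (auto simp: F_def indicator_def space_pair_measure)
  qed (use Fm in \<open>auto simp: split_beta'\<close>)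
  have inner: "(LINT t|lborel. F t \<omega>) = Z \<omega>" if "\<bar>Z \<omega>\<bar> \<le> C" for \<omega>
  proof -
    have "(LINT t|lborel. F t \<omega>) = (LINT t|lborel. indicator {-C..<Z \<omega>} t - indicator {-C..<0} t)"
      using that by (intro Bochner_Integration.integral_cong) (auto simp: F_def indicator_def)
    also have "\<dots> = measure lborel {-C..<Z \<omega>} - measure lborel {-C..<0}"
      using that C0 by (subst Bochner_Integration.integral_diff) (auto simp: integrable_indicator_iff emeasure_lborel_Ico)
    also have "\<dots> = Z \<omega>" using that C0 by simp
    finally show ?thesis .
  qed
  have "(LINT t|lborel. indicator {0..} t * p t + indicator {..<0} t * (p t - 1))
      = (LINT t|lborel. (\<integral>\<omega>. F t \<omega> \<partial>M))"
    using h_eq by simp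
  also have "\<dots> = (\<integral>\<omega>. (LINT t|lborel. F t \<omega>) \<partial>M)"
    by (rule PS.Fubini_integral[OF int, symmetric])
  also have "\<dots> = integral\<^sup>L M Z"
  proof (rule integral_cong_AE)
    show "AE \<omega> in M. (LINT t|lborel. F t \<omega>) = Z \<omega>"
      using bnd by eventually_elim (use inner in auto)
  qed (use lborel.borel_measurable_lebesgue_integral[OF Fm2] in auto)
  finally show ?thesis .
qed

lemma choquet_repr:
  assumes P: "prob_space M" and Zm[measurable]: "Z \<in> borel_measurable M"
    and bnd: "AE \<omega> in M. \<bar>Z \<omega>\<bar> \<le> C"
    and S: "mono_on {0..1} S" "S 0 = 0" "S 1 = 1"
  defines "p \<equiv> \<lambda>t. measure M {\<omega>\<in>space M. Z \<omega> > t}"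
  shows "integrable lborel (\<lambda>t. indicator {0..} t * S (p t) + indicator {..<0} t * (S (p t) - 1))"
    and "choquet M S Z = (LINT t|lborel. indicator {0..} t * S (p t) + indicator {..<0} t * (S (p t) - 1))"
proof -
  interpret prob_space M by fact
  have C0: "0 \<le> C" using bnd by (metis (mono_tags, lifting) AE_const abs_ge_zero eventually_mono order_trans)
  have p01: "0 \<le> p t" "p t \<le> 1" for t unfolding p_def by auto
  have pmono: "p s \<le> p t" if "t \<le> s" for s t
    unfolding p_def using that by (intro finite_measure_mono) auto
  have S01: "0 \<le> S (p t)" "S (p t) \<le> 1" for t
    using mono_onD[OF S(1), of 0 "p t"] mono_onD[OF S(1), of "p t" 1] p01[of t] S by auto
  have "mono (\<lambda>t. - S (p t))"
    by (intro monoI) (use mono_onD[OF S(1)] pmono p01 in \<open>force\<close>)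
  then have "(\<lambda>t. - S (p t)) \<in> borel_measurable borel" by (rule borel_measurable_mono)
  then have gm[measurable]: "(\<lambda>t. S (p t)) \<in> borel_measurable borel"
    using borel_measurable_uminus[of "\<lambda>t. - S (p t)" borel] by simp
  have pt: "p t = (\<integral>\<omega>. (if t < Z \<omega> then 1 else 0) \<partial>M)" for t
    unfolding p_def by (rule prob_as_integral[OF P Zm])
  have p_hi: "p t = 0" if "t \<ge> C" for t
  proof -
    have "(\<integral>\<omega>. (if t < Z \<omega> then 1 else 0) \<partial>M) = (\<integral>\<omega>. (0::real) \<partial>M)"
    proof (rule integral_cong_AE)
      show "AE \<omega> in M. (if t < Z \<omega> then 1 else 0) = (0::real)"
        using bnd by eventually_elim (use that in auto)
    qed auto
    then show ?thesis using pt by simp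
  qed
  have p_lo: "p t = 1" if "t < -C" for t
  proof -
    have "(\<integral>\<omega>. (if t < Z \<omega> then 1 else 0) \<partial>M) = (\<integral>\<omega>. (1::real) \<partial>M)"
    proof (rule integral_cong_AE)
      show "AE \<omega> in M. (if t < Z \<omega> then 1 else 0) = (1::real)"
        using bnd by eventually_elim (use that in auto)
    qed auto
    then show ?thesis using pt prob_space by simp
  qed
  have i1: "integrable lborel (\<lambda>t. indicator {0..} t * S (p t))"
  proof (rule integrableI_bounded_set[where A="{0..C}" and B=1])
    show "AE x in lborel. x \<in> {0..C} \<longrightarrow> norm (indicator {0..} x * S (p x)) \<le> 1"
      using S01 by (intro AE_I2) (auto simp: indicator_def)
    show "AE x in lborel. x \<notin> {0..C} \<longrightarrow> indicator {0..} x * S (p x) = 0"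
      using p_hi S by (intro AE_I2) (auto simp: indicator_def)
  qed (auto simp: emeasure_lborel_Icc_eq)
  have i2: "integrable lborel (\<lambda>t. indicator {..<0} t * (S (p t) - 1))"
  proof (rule integrableI_bounded_set[where A="{-C..0}" and B=1])
    show "AE x in lborel. x \<in> {-C..0} \<longrightarrow> norm (indicator {..<0} x * (S (p x) - 1)) \<le> 1"
      using S01 by (intro AE_I2) (auto simp: indicator_def)
    show "AE x in lborel. x \<notin> {-C..0} \<longrightarrow> indicator {..<0} x * (S (p x) - 1) = 0"
      using p_lo S by (intro AE_I2) (auto simp: indicator_def)
  qed (auto simp: emeasure_lborel_Icc_eq)
  show "integrable lborel (\<lambda>t. indicator {0..} t * S (p t) + indicator {..<0} t * (S (p t) - 1))"
    using i1 i2 by simp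
  show "choquet M S Z = (LINT t|lborel. indicator {0..} t * S (p t) + indicator {..<0} t * (S (p t) - 1))"
    unfolding choquet_def set_lebesgue_integral_def p_def[symmetric]
    using i1 i2 by (subst Bochner_Integration.integral_add) (auto simp: p_def)
qed

lemma choquet_le:
  assumes P: "prob_space M" and Zm[measurable]: "Z \<in> borel_measurable M"
    and bnd: "AE \<omega> in M. \<bar>Z \<omega>\<bar> \<le> C"
    and S: "mono_on {0..1} S" "S 0 = 0" "S 1 = 1" and Sle: "\<And>x. 0 \<le> x \<Longrightarrow> x \<le> 1 \<Longrightarrow> S x \<le> x"
  shows "choquet M S Z \<le> integral\<^sup>L M Z"
proof -
  interpret prob_space M by fact
  define p where "p = (\<lambda>t. measure M {\<omega>\<in>space M. Z \<omega> > t})"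
  have id: "mono_on {0..1} (\<lambda>x::real. x)" by (simp add: mono_onI)
  have "choquet M S Z = (LINT t|lborel. indicator {0..} t * S (p t) + indicator {..<0} t * (S (p t) - 1))"
    unfolding p_def by (rule choquet_repr(2)[OF P Zm bnd S])
  also have "\<dots> \<le> (LINT t|lborel. indicator {0..} t * p t + indicator {..<0} t * (p t - 1))"
  proof (rule integral_mono)
    show "integrable lborel (\<lambda>t. indicator {0..} t * S (p t) + indicator {..<0} t * (S (p t) - 1))"
      unfolding p_def by (rule choquet_repr(1)[OF P Zm bnd S])
    show "integrable lborel (\<lambda>t. indicator {0..} t * p t + indicator {..<0} t * (p t - 1))"
      unfolding p_def using choquet_repr(1)[OF P Zm bnd id] by simp
    fix t
    have "0 \<le> p t" "p t \<le> 1" unfolding p_def by auto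
    then have "S (p t) \<le> p t" by (rule Sle)
    then show "indicator {0..} t * S (p t) + indicator {..<0} t * (S (p t) - 1)
        \<le> indicator {0..} t * p t + indicator {..<0} t * (p t - 1)"
      by (auto simp: indicator_def)
  qed
  also have "\<dots> = integral\<^sup>L M Z"
    unfolding p_def by (rule layer_cake[OF P Zm bnd])
  finally show ?thesis .
qed

lemma choquet_const:
  assumes P: "prob_space M" and Zm[measurable]: "Z \<in> borel_measurable M"
    and c: "AE \<omega> in M. Z \<omega> = c"
    and S: "S 0 = 0" "S 1 = 1"
  shows "choquet M S Z = c"
proof -
  interpret prob_space M by fact
  have bnd: "AE \<omega> in M. \<bar>Z \<omega>\<bar> \<le> \<bar>c\<bar>" using c by eventually_elim auto
  have id: "mono_on {0..1} (\<lambda>x::real. x)" by (simp add: mono_onI)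
  define p where "p = (\<lambda>t. measure M {\<omega>\<in>space M. Z \<omega> > t})"
  have pv: "p t = (if t < c then 1 else 0)" for t
  proof -
    have "p t = (\<integral>\<omega>. (if t < Z \<omega> then 1 else 0) \<partial>M)"
      unfolding p_def by (rule prob_as_integral[OF P Zm])
    also have "\<dots> = (\<integral>\<omega>. (if t < c then 1 else 0::real) \<partial>M)"
    proof (rule integral_cong_AE)
      show "AE \<omega> in M. (if t < Z \<omega> then 1 else 0) = (if t < c then 1 else 0::real)"
        using c by eventually_elim auto
    qed auto
    finally show ?thesis using prob_space by simp
  qed
  have eq: "S (measure M {\<omega>\<in>space M. Z \<omega> > t}) = measure M {\<omega>\<in>space M. Z \<omega> > t}" for t
    using pv[of t] S unfolding p_def by (auto split: if_splits)
  have "choquet M S Z = choquet M (\<lambda>x. x) Z"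
    unfolding choquet_def using eq by simp
  also have "\<dots> = (LINT t|lborel. indicator {0..} t * p t + indicator {..<0} t * (p t - 1))"
    unfolding p_def using choquet_repr(2)[OF P Zm bnd id] by simp
  also have "\<dots> = integral\<^sup>L M Z"
    unfolding p_def by (rule layer_cake[OF P Zm bnd])
  also have "\<dots> = integral\<^sup>L M (\<lambda>_. c)"
    using c by (intro integral_cong_AE) auto
  finally show ?thesis using prob_space by simp
qed


lemma sc_strict_mono:
  assumes sc: "strictly_concave_on UNIV u" and m: "mono u" and ab: "a < b"
  shows "u a < u b"
proof (rule ccontr)
  assume "\<not> u a < u b"
  moreover have "u a \<le> u b" using m ab by (simp add: monoD)
  ultimately have eq: "u a = u b" by simp
  have H: "\<And>x y t. x \<noteq> y \<Longrightarrow> 0 < t \<Longrightarrow> t < 1 \<Longrightarrow> u ((1 - t) * x + t * y) > (1 - t) * u x + t * u y"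
    using sc unfolding strictly_concave_on_def by blast
  have "u ((1 - 1/2) * a + (1/2) * b) > (1 - 1/2) * u a + (1/2) * u b"
    using H[of a b "1/2"] ab by simp
  moreover have "u ((1 - 1/2) * a + (1/2) * b) \<le> u b" using ab by (intro monoD[OF m]) simp
  ultimately show False using eq by simp
qed

lemma sc_tangent:
  assumes sc: "strictly_concave_on UNIV u" and d: "(u has_real_derivative d) (at m)"
  shows "u x \<le> u m + d * (x - m)" and "x \<noteq> m \<Longrightarrow> u x < u m + d * (x - m)"
proof -
  have cv: "convex_on UNIV (\<lambda>x. - u x)"
  proof (rule convex_onI)
    fix t x y :: real assume t: "0 < t" "t < 1"
    show "- u ((1 - t) *\<^sub>R x + t *\<^sub>R y) \<le> (1 - t) * - u x + t * - u y"
    proof (cases "x = y")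
      case True then show ?thesis by (simp add: algebra_simps)
    next
      case False
      have H: "\<And>x y t. x \<noteq> y \<Longrightarrow> 0 < t \<Longrightarrow> t < 1 \<Longrightarrow> u ((1 - t) * x + t * y) > (1 - t) * u x + t * u y"
        using sc unfolding strictly_concave_on_def by blast
      from H[OF False t] show ?thesis by (simp add: algebra_simps)
    qed
  qed simp
  have tan: "u z \<le> u m + d * (z - m)" for z
  proof -
    have "(\<lambda>x. - u x) z - (\<lambda>x. - u x) m \<ge> (- d) * (z - m)"
    proof (rule convex_on_imp_above_tangent[OF cv])
      show "((\<lambda>x. - u x) has_real_derivative - d) (at m within UNIV)" using DERIV_minus[OF d] by simp
    qed auto
    then show ?thesis by (simp add: algebra_simps)
  qed
  show "u x \<le> u m + d * (x - m)" by (rule tan)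
  assume xm: "x \<noteq> m"
  show "u x < u m + d * (x - m)"
  proof (rule ccontr)
    assume "\<not> ?thesis"
    then have e: "u x = u m + d * (x - m)" using tan[of x] by simp
    have H: "\<And>x y t. x \<noteq> y \<Longrightarrow> 0 < t \<Longrightarrow> t < 1 \<Longrightarrow> u ((1 - t) * x + t * y) > (1 - t) * u x + t * u y"
      using sc unfolding strictly_concave_on_def by blast
    have "u ((1 - 1/2) * x + (1/2) * m) > (1 - 1/2) * u x + (1/2) * u m"
      using H[of x m "1/2"] xm by simp
    moreover have "u ((1 - 1/2) * x + (1/2) * m) \<le> u m + d * ((1 - 1/2) * x + (1/2) * m - m)" by (rule tan)
    ultimately show False using e by (simp add: algebra_simps)
  qed
qed

lemma jensen_u:
  assumes P: "prob_space M" and Xm[measurable]: "X \<in> borel_measurable M"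
    and bnd: "AE \<omega> in M. \<bar>X \<omega>\<bar> \<le> C"
    and sc: "strictly_concave_on UNIV u" and mo: "mono u"
    and d: "\<And>x. (u has_real_derivative u' x) (at x)"
  shows "(\<lambda>\<omega>. u (X \<omega>)) \<in> borel_measurable M"
    and "AE \<omega> in M. \<bar>u (X \<omega>)\<bar> \<le> max \<bar>u (-C)\<bar> \<bar>u C\<bar>"
    and "integral\<^sup>L M (\<lambda>\<omega>. u (X \<omega>)) \<le> u (integral\<^sup>L M X)"
    and "\<not> (\<exists>c. AE \<omega> in M. X \<omega> = c) \<Longrightarrow> integral\<^sup>L M (\<lambda>\<omega>. u (X \<omega>)) < u (integral\<^sup>L M X)"
proof -
  interpret prob_space M by fact
  have um: "u \<in> borel_measurable borel" using mo by (rule borel_measurable_mono)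
  show uXm: "(\<lambda>\<omega>. u (X \<omega>)) \<in> borel_measurable M" by (rule measurable_compose[OF Xm um])
  show ub: "AE \<omega> in M. \<bar>u (X \<omega>)\<bar> \<le> max \<bar>u (-C)\<bar> \<bar>u C\<bar>"
    using bnd
  proof eventually_elim
    case (elim \<omega>)
    then have "-C \<le> X \<omega>" "X \<omega> \<le> C" by auto
    then have "u (-C) \<le> u (X \<omega>)" "u (X \<omega>) \<le> u C" using mo by (simp_all add: monoD)
    then show ?case by linarith
  qed
  have iX: "integrable M X" using bnd by (intro integrable_const_bound[where B=C]) simp_all
  have iuX: "integrable M (\<lambda>\<omega>. u (X \<omega>))" using ub uXm by (intro integrable_const_bound) simp_all
  define m where "m = integral\<^sup>L M X"
  define g where "g = (\<lambda>\<omega>. u m + u' m * (X \<omega> - m) - u (X \<omega>))"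
  have ig: "integrable M g" unfolding g_def using iX iuX by (intro Bochner_Integration.integrable_diff Bochner_Integration.integrable_add integrable_mult_right) simp_all
  have g0: "0 \<le> g \<omega>" for \<omega> using sc_tangent(1)[OF sc d[of m], of "X \<omega>"] unfolding g_def by linarith
  have intg: "integral\<^sup>L M g = u m - integral\<^sup>L M (\<lambda>\<omega>. u (X \<omega>))"
  proof -
    have "integral\<^sup>L M g = integral\<^sup>L M (\<lambda>\<omega>. u m + u' m * (X \<omega> - m)) - integral\<^sup>L M (\<lambda>\<omega>. u (X \<omega>))"
      unfolding g_def using iX iuX by (intro Bochner_Integration.integral_diff) simp_all
    also have "integral\<^sup>L M (\<lambda>\<omega>. u m + u' m * (X \<omega> - m)) = integral\<^sup>L M (\<lambda>\<omega>. u m) + integral\<^sup>L M (\<lambda>\<omega>. u' m * (X \<omega> - m))"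
      using iX by (intro Bochner_Integration.integral_add) simp_all
    also have "integral\<^sup>L M (\<lambda>\<omega>. u' m * (X \<omega> - m)) = u' m * integral\<^sup>L M (\<lambda>\<omega>. X \<omega> - m)"
      by (rule integral_mult_right_zero)
    also have "integral\<^sup>L M (\<lambda>\<omega>. X \<omega> - m) = integral\<^sup>L M X - integral\<^sup>L M (\<lambda>\<omega>. m)"
      using iX by (intro Bochner_Integration.integral_diff) simp_all
    also have "integral\<^sup>L M (\<lambda>\<omega>. m) = m" using prob_space by simp
    also have "integral\<^sup>L M (\<lambda>\<omega>. u m) = u m" using prob_space by simp
    finally show ?thesis by (simp add: m_def)
  qed
  have "0 \<le> integral\<^sup>L M g" using g0 by (simp add: integral_nonneg)
  then show "integral\<^sup>L M (\<lambda>\<omega>. u (X \<omega>)) \<le> u (integral\<^sup>L M X)" using intg unfolding m_def by linarith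
  assume nc: "\<not> (\<exists>c. AE \<omega> in M. X \<omega> = c)"
  show "integral\<^sup>L M (\<lambda>\<omega>. u (X \<omega>)) < u (integral\<^sup>L M X)"
  proof (rule ccontr)
    assume "\<not> ?thesis"
    then have "integral\<^sup>L M g = 0" using intg \<open>0 \<le> integral\<^sup>L M g\<close> unfolding m_def by linarith
    then have "AE \<omega> in M. g \<omega> = 0" using integral_nonneg_eq_0_iff_AE[OF ig] g0 by (simp add: AE_I2)
    then have "AE \<omega> in M. X \<omega> = m"
    proof eventually_elim
      case (elim \<omega>)
      show ?case
      proof (rule ccontr)
        assume "X \<omega> \<noteq> m"
        from sc_tangent(2)[OF sc d[of m] this] elim show False unfolding g_def by linarith
      qed
    qed
    then have "\<exists>c. AE \<omega> in M. X \<omega> = c" by (rule exI)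
    with nc show False by (rule notE)
  qed
qed

theorem corollary3p8:
  fixes M :: "'a measure" and T :: "real \<Rightarrow> real" and u :: "nat \<Rightarrow> real \<Rightarrow> real"
    and \<X> :: "('a \<Rightarrow> real) set" and n :: nat and w :: real and Xs :: "nat \<Rightarrow> 'a \<Rightarrow> real"
  assumes "prob_space M" and "nonatomic M"
    and "\<X> \<subseteq> Linf M" and "\<And>c. (\<lambda>_. c) \<in> \<X>"
    and "n \<ge> 2"
    and "twice_differentiable_on {0..1} T" and "strict_mono_on {0..1} T"
    and "T 0 = 0" and "T 1 = 1"
    and "\<And>i. i < n \<Longrightarrow> twice_differentiable_on UNIV (u i)"
    and "\<And>i. i < n \<Longrightarrow> strictly_concave_on UNIV (u i)"
    and "\<And>i. i < n \<Longrightarrow> mono (u i)"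
    and "convex_on {0..1} T"
    and "Xs \<in> allocations M \<X> n w"
  shows "pareto_optimal M T u \<X> n w Xs \<longleftrightarrow> full_insurance M n Xs"
proof -
  note P = assms(1)
  interpret prob_space M by fact
  have Tmono: "mono_on {0..1} T" using assms(7) by (rule strict_mono_on_imp_mono_on)
  have Tle: "T x \<le> x" if "0 \<le> x" "x \<le> 1" for x
    using convex_onD[OF assms(13), of x 0 1] that assms(8,9) by simp
  have deriv: "\<exists>u'. \<forall>x. (u i has_real_derivative u' x) (at x)" if "i < n" for i
    using assms(10)[OF that] unfolding twice_differentiable_on_def by auto
  have LinfD: "Y \<in> borel_measurable M" "\<exists>C. AE \<omega> in M. \<bar>Y \<omega>\<bar> \<le> C" if "Y \<in> \<X>" for Y
    using assms(3) that unfolding Linf_def by auto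
  have intY: "integrable M Y" if Y: "Y \<in> \<X>" for Y
  proof -
    obtain C where C: "AE \<omega> in M. \<bar>Y \<omega>\<bar> \<le> C" using LinfD(2)[OF Y] by blast
    show ?thesis using C LinfD(1)[OF Y] by (intro integrable_const_bound[where B=C]) simp_all
  qed
  have ubound: "util M T u i Y \<le> u i (integral\<^sup>L M Y)"
    and ustrict: "\<not> (\<exists>c. AE \<omega> in M. Y \<omega> = c) \<Longrightarrow> util M T u i Y < u i (integral\<^sup>L M Y)"
    if iY: "i < n" "Y \<in> \<X>" for i Y
  proof -
    obtain C where C: "AE \<omega> in M. \<bar>Y \<omega>\<bar> \<le> C" using LinfD(2)[OF iY(2)] by blast
    obtain u' where d: "\<And>x. (u i has_real_derivative u' x) (at x)" using deriv[OF iY(1)] by blast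
    note J = jensen_u[OF P LinfD(1)[OF iY(2)] C assms(11)[OF iY(1)] assms(12)[OF iY(1)] d]
    have cle: "util M T u i Y \<le> integral\<^sup>L M (\<lambda>\<omega>. u i (Y \<omega>))"
    proof (cases "i = 0")
      case True
      then show ?thesis
        using choquet_le[OF P J(1) J(2) Tmono assms(8,9) Tle] by (simp add: util_def)
    next
      case False
      then show ?thesis by (simp add: util_def)
    qed
    show "util M T u i Y \<le> u i (integral\<^sup>L M Y)" using cle J(3) by linarith
    assume nc: "\<not> (\<exists>c. AE \<omega> in M. Y \<omega> = c)"
    show "util M T u i Y < u i (integral\<^sup>L M Y)" using cle J(4)[OF nc] by linarith
  qed
  have uconst: "util M T u i Y = u i c" if "i < n" "Y \<in> \<X>" "AE \<omega> in M. Y \<omega> = c" for i Y c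
  proof -
    have um: "u i \<in> borel_measurable borel" using assms(12)[OF that(1)] by (rule borel_measurable_mono)
    have m: "(\<lambda>\<omega>. u i (Y \<omega>)) \<in> borel_measurable M" by (rule measurable_compose[OF LinfD(1)[OF that(2)] um])
    have ae: "AE \<omega> in M. u i (Y \<omega>) = u i c" using that(3) by eventually_elim simp
    show ?thesis
    proof (cases "i = 0")
      case True
      then show ?thesis using choquet_const[OF P m ae assms(8,9)] by (simp add: util_def)
    next
      case False
      have "integral\<^sup>L M (\<lambda>\<omega>. u i (Y \<omega>)) = integral\<^sup>L M (\<lambda>\<omega>. u i c)"
        using m ae by (intro integral_cong_AE) simp_all
      then show ?thesis using False prob_space by (simp add: util_def)
    qed
  qed
  have esum: "(\<Sum>i<n. integral\<^sup>L M (Ys i)) = w" if "Ys \<in> allocations M \<X> n w" for Ys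
  proof -
    have mem: "\<And>i. i < n \<Longrightarrow> Ys i \<in> \<X>" and ae: "AE \<omega> in M. (\<Sum>i<n. Ys i \<omega>) = w"
      using that unfolding allocations_def by auto
    have "(\<Sum>i<n. integral\<^sup>L M (Ys i)) = integral\<^sup>L M (\<lambda>\<omega>. \<Sum>i<n. Ys i \<omega>)"
      using mem intY by (subst Bochner_Integration.integral_sum) auto
    also have "\<dots> = integral\<^sup>L M (\<lambda>\<omega>. w)"
    proof (rule integral_cong_AE)
      show "(\<lambda>\<omega>. \<Sum>i<n. Ys i \<omega>) \<in> borel_measurable M" using mem LinfD(1) by auto
    qed (use ae in simp_all)
    finally show ?thesis using prob_space by simp
  qed
  have Xmem: "\<And>i. i < n \<Longrightarrow> Xs i \<in> \<X>" using assms(14) unfolding allocations_def by auto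
  show ?thesis
  proof
    assume po: "pareto_optimal M T u \<X> n w Xs"
    show "full_insurance M n Xs"
    proof (rule ccontr)
      assume "\<not> full_insurance M n Xs"
      then obtain j where j: "j < n" "\<not> (\<exists>c. AE \<omega> in M. Xs j \<omega> = c)"
        unfolding full_insurance_def by blast
      define Ys where "Ys = (\<lambda>i::nat. \<lambda>_::'a. integral\<^sup>L M (Xs i))"
      have Ymem: "Ys i \<in> \<X>" for i unfolding Ys_def by (rule assms(4))
      have "Ys \<in> allocations M \<X> n w"
        unfolding allocations_def using Ymem esum[OF assms(14)] by (simp add: Ys_def)
      moreover have "\<forall>i<n. util M T u i (Ys i) \<ge> util M T u i (Xs i)"
      proof (intro allI impI)
        fix i assume i: "i < n"
        have "util M T u i (Ys i) = u i (integral\<^sup>L M (Xs i))"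
          using uconst[OF i Ymem] by (simp add: Ys_def)
        then show "util M T u i (Ys i) \<ge> util M T u i (Xs i)" using ubound[OF i Xmem[OF i]] by simp
      qed
      moreover have "util M T u j (Ys j) > util M T u j (Xs j)"
      proof -
        have "util M T u j (Ys j) = u j (integral\<^sup>L M (Xs j))"
          using uconst[OF j(1) Ymem] by (simp add: Ys_def)
        then show ?thesis using ustrict[OF j(1) Xmem[OF j(1)] j(2)] by simp
      qed
      ultimately show False using po j(1) unfolding pareto_optimal_def by blast
    qed
  next
    assume fi: "full_insurance M n Xs"
    then have "\<forall>i<n. \<exists>c. AE \<omega> in M. Xs i \<omega> = c" unfolding full_insurance_def by blast
    then obtain c where c: "\<And>i. i < n \<Longrightarrow> AE \<omega> in M. Xs i \<omega> = c i" by metis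
    have uX: "util M T u i (Xs i) = u i (c i)" if "i < n" for i
      using uconst[OF that Xmem[OF that] c[OF that]] .
    have EX: "integral\<^sup>L M (Xs i) = c i" if "i < n" for i
    proof -
      have "integral\<^sup>L M (Xs i) = integral\<^sup>L M (\<lambda>_. c i)"
        using c[OF that] LinfD(1)[OF Xmem[OF that]] by (intro integral_cong_AE) simp_all
      then show ?thesis using prob_space by simp
    qed
    have csum: "(\<Sum>i<n. c i) = w" using esum[OF assms(14)] EX by simp
    show "pareto_optimal M T u \<X> n w Xs"
      unfolding pareto_optimal_def
    proof (intro conjI assms(14) notI)
      assume "\<exists>Ys\<in>allocations M \<X> n w. (\<forall>i<n. util M T u i (Xs i) \<le> util M T u i (Ys i)) \<and>
                (\<exists>i<n. util M T u i (Xs i) < util M T u i (Ys i))"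
      then obtain Ys k where Ys: "Ys \<in> allocations M \<X> n w"
        and ge: "\<forall>i<n. util M T u i (Xs i) \<le> util M T u i (Ys i)"
        and k: "k < n" "util M T u k (Xs k) < util M T u k (Ys k)" by blast
      have Ymem: "\<And>i. i < n \<Longrightarrow> Ys i \<in> \<X>" using Ys unfolding allocations_def by auto
      have le: "c i \<le> integral\<^sup>L M (Ys i)" if i: "i < n" for i
      proof (rule ccontr)
        assume "\<not> ?thesis"
        then have "u i (integral\<^sup>L M (Ys i)) < u i (c i)"
          using sc_strict_mono[OF assms(11)[OF i] assms(12)[OF i]] by simp
        moreover have "u i (c i) \<le> util M T u i (Ys i)" using ge i uX[OF i] by auto
        moreover have "util M T u i (Ys i) \<le> u i (integral\<^sup>L M (Ys i))" by (rule ubound[OF i Ymem[OF i]])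
        ultimately show False by simp
      qed
      have lt: "c k < integral\<^sup>L M (Ys k)"
      proof (rule ccontr)
        assume "\<not> ?thesis"
        then have "u k (integral\<^sup>L M (Ys k)) \<le> u k (c k)"
          using assms(12)[OF k(1)] by (simp add: monoD)
        moreover have "u k (c k) < util M T u k (Ys k)" using k uX[OF k(1)] by auto
        moreover have "util M T u k (Ys k) \<le> u k (integral\<^sup>L M (Ys k))" by (rule ubound[OF k(1) Ymem[OF k(1)]])
        ultimately show False by simp
      qed
      have "(\<Sum>i<n. c i) < (\<Sum>i<n. integral\<^sup>L M (Ys i))"
        by (rule sum_strict_mono_ex1) (use le lt k(1) in auto)
      then show False using csum esum[OF Ys] by simp
    qed
  qed
qed

end
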